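(* Let $\gamma\in(0,1)$, and let $\hat c^1,\hat c^2,\dots$ be independent, identically distributed real random variables with mean $c$ and variance $\sigma^2<\infty$. Let $\alpha_0,\alpha_1,\dots$ be deterministic real numbers. Define $\bar v^0=0$ and, for $n\ge1$, $$\hat v^n=\hat c^n+\gamma\bar v^{n-1},\qquad \bar v^n=(1-\alpha_{n-1})\bar v^{n-1}+\alpha_{n-1}\hat v^n.$$ Define $\delta^1=\alpha_0$, $\lambda^1=\alpha_0^2$ and, for $n>1$, $$\delta^n=\alpha_{n-1}+\big(1-(1-\gamma)\alpha_{n-1}\big)\delta^{n-1},\qquad \lambda^n=\alpha_{n-1}^2+\big(1-(1-\gamma)\alpha_{n-1}\big)^2\lambda^{n-1}.$$ Then for all $n\ge1$, $\mathbb{E}(\bar v^n)=\delta^n c$ and $\mathrm{Var}(\bar v^n)=\lambda^n\sigma^2$. *)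

theory Defs
  imports "HOL-Probability.Probability"
begin

text \<open>The iterates. vbar n x is the value of the smoothed estimate after n steps on outcome x;
  chat n is the n-th observation (indices n \<ge> 1 are used), alpha k the k-th step size.\<close>
fun vbar :: "real \<Rightarrow> (nat \<Rightarrow> real) \<Rightarrow> (nat \<Rightarrow> 'a \<Rightarrow> real) \<Rightarrow> nat \<Rightarrow> 'a \<Rightarrow> real" where
  "vbar \<gamma> \<alpha> chat 0 x = 0"
| "vbar \<gamma> \<alpha> chat (Suc n) x =
     (1 - \<alpha> n) * vbar \<gamma> \<alpha> chat n x + \<alpha> n * (chat (Suc n) x + \<gamma> * vbar \<gamma> \<alpha> chat n x)"

definition vhat :: "real \<Rightarrow> (nat \<Rightarrow> real) \<Rightarrow> (nat \<Rightarrow> 'a \<Rightarrow> real) \<Rightarrow> nat \<Rightarrow> 'a \<Rightarrow> real" where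
  "vhat \<gamma> \<alpha> chat n x = chat n x + \<gamma> * vbar \<gamma> \<alpha> chat (n - 1) x"

text \<open>delta and lambda, defined for n \<ge> 1 (value at 0 is an unused default).\<close>
fun delta :: "real \<Rightarrow> (nat \<Rightarrow> real) \<Rightarrow> nat \<Rightarrow> real" where
  "delta \<gamma> \<alpha> 0 = 0"
| "delta \<gamma> \<alpha> (Suc 0) = \<alpha> 0"
| "delta \<gamma> \<alpha> (Suc (Suc n)) = \<alpha> (Suc n) + (1 - (1 - \<gamma>) * \<alpha> (Suc n)) * delta \<gamma> \<alpha> (Suc n)"

fun lambda :: "real \<Rightarrow> (nat \<Rightarrow> real) \<Rightarrow> nat \<Rightarrow> real" where
  "lambda \<gamma> \<alpha> 0 = 0"
| "lambda \<gamma> \<alpha> (Suc 0) = (\<alpha> 0)\<^sup>2"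
| "lambda \<gamma> \<alpha> (Suc (Suc n)) = (\<alpha> (Suc n))\<^sup>2 + (1 - (1 - \<gamma>) * \<alpha> (Suc n))\<^sup>2 * lambda \<gamma> \<alpha> (Suc n)"

end

theory Submission
  imports Defs
begin
lemma vbar_local:
  assumes "\<forall>i\<in>{1..n}. \<omega> i = chat i x"
  shows "vbar \<gamma> \<alpha> chat n x = vbar \<gamma> \<alpha> (\<lambda>i (_::unit). \<omega> i) n ()"
  using assms by (induction n) auto

lemma vbar_meas:
  "m \<le> n \<Longrightarrow> (\<lambda>\<omega>. vbar \<gamma> \<alpha> (\<lambda>i (_::unit). \<omega> i) m ()) \<in> borel_measurable (PiM {1..n} (\<lambda>_. borel))"
proof (induction m)
  case 0 then show ?case by simp
next
  case (Suc m)
  have c: "(\<lambda>\<omega>. \<omega> (Suc m)) \<in> borel_measurable (PiM {1..n} (\<lambda>_. (borel::real measure)))"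
    using Suc.prems by (intro measurable_component_singleton) auto
  show ?case using Suc c by simp
qed

lemma (in prob_space) vbar_indep:
  fixes chat :: "nat \<Rightarrow> 'a \<Rightarrow> real"
  assumes indep: "indep_vars (\<lambda>_. borel) chat {1..}"
  shows "indep_var borel (vbar \<gamma> \<alpha> chat n) borel (chat (Suc n))"
proof -
  have "indep_var borel ((\<lambda>\<omega>. vbar \<gamma> \<alpha> (\<lambda>i (_::unit). \<omega> i) n ()) \<circ> (\<lambda>x. restrict (\<lambda>i. chat i x) {1..n}))
       borel ((\<lambda>\<omega>. \<omega> (Suc n)) \<circ> (\<lambda>x. restrict (\<lambda>i. chat i x) {Suc n}))"
    by (intro indep_var_compose[OF indep_var_restrict[OF indep]] vbar_meas measurable_component_singleton) auto
  also have "(\<lambda>\<omega>. vbar \<gamma> \<alpha> (\<lambda>i (_::unit). \<omega> i) n ()) \<circ> (\<lambda>x. restrict (\<lambda>i. chat i x) {1..n}) = vbar \<gamma> \<alpha> chat n"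
    by (rule ext, simp, rule vbar_local[symmetric]) auto
  also have "(\<lambda>\<omega>. \<omega> (Suc n)) \<circ> (\<lambda>x. restrict (\<lambda>i. chat i x) {Suc n}) = chat (Suc n)"
    by auto
  finally show ?thesis .
qed

fun D :: "real \<Rightarrow> (nat \<Rightarrow> real) \<Rightarrow> nat \<Rightarrow> real" where
  "D \<gamma> \<alpha> 0 = 0" | "D \<gamma> \<alpha> (Suc n) = \<alpha> n + (1 - (1 - \<gamma>) * \<alpha> n) * D \<gamma> \<alpha> n"
fun L :: "real \<Rightarrow> (nat \<Rightarrow> real) \<Rightarrow> nat \<Rightarrow> real" where
  "L \<gamma> \<alpha> 0 = 0" | "L \<gamma> \<alpha> (Suc n) = (\<alpha> n)\<^sup>2 + (1 - (1 - \<gamma>) * \<alpha> n)\<^sup>2 * L \<gamma> \<alpha> n"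

lemma D_delta: "n \<ge> 1 \<Longrightarrow> D \<gamma> \<alpha> n = delta \<gamma> \<alpha> n"
proof (induction \<gamma> \<alpha> n rule: delta.induct)
qed auto

lemma L_lambda: "n \<ge> 1 \<Longrightarrow> L \<gamma> \<alpha> n = lambda \<gamma> \<alpha> n"
proof (induction \<gamma> \<alpha> n rule: lambda.induct)
qed auto

lemma vbar_Suc': "vbar \<gamma> \<alpha> chat (Suc n) x = (1 - (1 - \<gamma>) * \<alpha> n) * vbar \<gamma> \<alpha> chat n x + \<alpha> n * chat (Suc n) x"
  by (simp add: algebra_simps)

lemma (in prob_space) main:
  fixes chat :: "nat \<Rightarrow> 'a \<Rightarrow> real"
  assumes rv: "\<And>n. n \<ge> 1 \<Longrightarrow> chat n \<in> borel_measurable M"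
    and indep: "indep_vars (\<lambda>_. borel) chat {1..}"
    and sq_int: "\<And>n. n \<ge> 1 \<Longrightarrow> integrable M (\<lambda>x. (chat n x)\<^sup>2)"
    and mean: "\<And>n. n \<ge> 1 \<Longrightarrow> expectation (chat n) = c"
    and var: "\<And>n. n \<ge> 1 \<Longrightarrow> variance (chat n) = \<sigma>\<^sup>2"
  shows "vbar \<gamma> \<alpha> chat n \<in> borel_measurable M \<and> integrable M (vbar \<gamma> \<alpha> chat n)
    \<and> integrable M (\<lambda>x. (vbar \<gamma> \<alpha> chat n x)\<^sup>2)
    \<and> expectation (vbar \<gamma> \<alpha> chat n) = D \<gamma> \<alpha> n * c
    \<and> variance (vbar \<gamma> \<alpha> chat n) = L \<gamma> \<alpha> n * \<sigma>\<^sup>2"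
proof (induction n)
  case 0 then show ?case by simp
next
  case (Suc n)
  define V where "V = vbar \<gamma> \<alpha> chat n"
  define X where "X = chat (Suc n)"
  define a where "a = 1 - (1 - \<gamma>) * \<alpha> n"
  define b where "b = \<alpha> n"
  define m where "m = D \<gamma> \<alpha> n * c"
  have eq: "vbar \<gamma> \<alpha> chat (Suc n) = (\<lambda>x. a * V x + b * X x)"
    unfolding V_def X_def a_def b_def by (rule ext, rule vbar_Suc')
  have Vm[measurable]: "V \<in> borel_measurable M" and Vi: "integrable M V"
    and V2: "integrable M (\<lambda>x. (V x)\<^sup>2)" and VE: "expectation V = m"
    and VV: "variance V = L \<gamma> \<alpha> n * \<sigma>\<^sup>2"
    using Suc.IH unfolding V_def m_def by auto
  have Xm[measurable]: "X \<in> borel_measurable M" using rv X_def by auto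
  have X2: "integrable M (\<lambda>x. (X x)\<^sup>2)" using sq_int X_def by auto
  have Xi: "integrable M X" by (rule square_integrable_imp_integrable[OF Xm X2])
  have XE: "expectation X = c" and XV: "variance X = \<sigma>\<^sup>2" using mean var X_def by auto
  have ind: "indep_var borel V borel X" unfolding V_def X_def by (rule vbar_indep[OF indep])
  have ind2: "indep_var borel ((\<lambda>t. t - m) \<circ> V) borel ((\<lambda>t. t - c) \<circ> X)"
    by (rule indep_var_compose[OF ind]) auto
  have VXi: "integrable M (\<lambda>x. V x * X x)" by (rule indep_var_integrable[OF ind Vi Xi])
  have cross: "expectation (\<lambda>x. (V x - m) * (X x - c)) = 0"
    using indep_var_lebesgue_integral[OF ind2] Vi Xi VE XE by (simp add: comp_def prob_space)
  have crossi: "integrable M (\<lambda>x. (V x - m) * (X x - c))"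
    using indep_var_integrable[OF ind2] Vi Xi by (simp add: comp_def)
  have Vc2: "integrable M (\<lambda>x. (V x - m)\<^sup>2)"
    using V2 Vi by (simp add: power2_diff)
  have Xc2: "integrable M (\<lambda>x. (X x - c)\<^sup>2)"
    using X2 Xi by (simp add: power2_diff)
  have E: "expectation (\<lambda>x. a * V x + b * X x) = a * m + b * c"
    using Vi Xi VE XE by simp
  have sq: "(\<lambda>x. (a * V x + b * X x - (a * m + b * c))\<^sup>2) =
     (\<lambda>x. a\<^sup>2 * (V x - m)\<^sup>2 + b\<^sup>2 * (X x - c)\<^sup>2 + 2 * a * b * ((V x - m) * (X x - c)))"
    by (rule ext) (simp add: power2_eq_square algebra_simps)
  have "variance (\<lambda>x. a * V x + b * X x) = a\<^sup>2 * variance V + b\<^sup>2 * variance X"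
    unfolding E sq using Vc2 Xc2 crossi cross VE XE by simp
  then have Var: "variance (\<lambda>x. a * V x + b * X x) = L \<gamma> \<alpha> (Suc n) * \<sigma>\<^sup>2"
    using VV XV unfolding a_def b_def by (simp add: algebra_simps)
  have I2: "integrable M (\<lambda>x. (a * V x + b * X x)\<^sup>2)"
  proof -
    have "(\<lambda>x. (a * V x + b * X x)\<^sup>2) = (\<lambda>x. a\<^sup>2 * (V x)\<^sup>2 + b\<^sup>2 * (X x)\<^sup>2 + 2 * a * b * (V x * X x))"
      by (rule ext) (simp add: power2_eq_square algebra_simps)
    then show ?thesis using V2 X2 VXi by simp
  qed
  show ?case unfolding eq using Vi Xi I2 E Var unfolding m_def a_def b_def by (simp add: algebra_simps)
qed

theorem proposition1:
  fixes M :: "'a measure" and chat :: "nat \<Rightarrow> 'a \<Rightarrow> real"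
    and \<alpha> :: "nat \<Rightarrow> real" and \<gamma> c \<sigma> :: real
  assumes "prob_space M"
    and "0 < \<gamma>" and "\<gamma> < 1"
    and rv: "\<And>n. n \<ge> 1 \<Longrightarrow> chat n \<in> borel_measurable M"
    and indep: "prob_space.indep_vars M (\<lambda>_. borel) chat {1..}"
    and ident: "\<And>n. n \<ge> 1 \<Longrightarrow> distr M borel (chat n) = distr M borel (chat 1)"
    and sq_int: "\<And>n. n \<ge> 1 \<Longrightarrow> integrable M (\<lambda>x. (chat n x)\<^sup>2)"
    and mean: "\<And>n. n \<ge> 1 \<Longrightarrow> prob_space.expectation M (chat n) = c"
    and var: "\<And>n. n \<ge> 1 \<Longrightarrow> prob_space.variance M (chat n) = \<sigma>\<^sup>2"
  shows "\<forall>n\<ge>1. prob_space.expectation M (vbar \<gamma> \<alpha> chat n) = delta \<gamma> \<alpha> n * c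
              \<and> prob_space.variance M (vbar \<gamma> \<alpha> chat n) = lambda \<gamma> \<alpha> n * \<sigma>\<^sup>2"
proof (intro allI impI)
  fix n :: nat assume n: "n \<ge> 1"
  interpret prob_space M by fact
  have "expectation (vbar \<gamma> \<alpha> chat n) = D \<gamma> \<alpha> n * c \<and> variance (vbar \<gamma> \<alpha> chat n) = L \<gamma> \<alpha> n * \<sigma>\<^sup>2"
    using main[OF rv indep sq_int mean var, of \<gamma> \<alpha> n] by blast
  then show "expectation (vbar \<gamma> \<alpha> chat n) = delta \<gamma> \<alpha> n * c \<and> variance (vbar \<gamma> \<alpha> chat n) = lambda \<gamma> \<alpha> n * \<sigma>\<^sup>2"
    using D_delta[OF n] L_lambda[OF n] by metis
qed

end
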